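(* Let $G$ be a bipartite graph with no universal vertex, let $B_0\in\mathcal{B}(G)$ and $v\in B_0$, and suppose $B_0-v\in\mathcal{B}(G-v)$. Then: (i) for every $B\in\mathcal{B}(G)$ with $B-v\in\mathcal{B}(G-v)$ such that $(B,B_0)$ is an arc of $\mathbf{H}(G)$, $(B-v,B_0-v)$ is an arc of $\mathbf{H}(G-v)$; (ii) for every $B\in\mathcal{B}(G)$ with $B-v\in\mathcal{B}(G-v)$ such that $(B_0,B)$ is an arc of $\mathbf{H}(G)$, $(B_0-v,B-v)$ is an arc of $\mathbf{H}(G-v)$.
   Context: For a bipartite graph with color classes $X,Y$, a biclique is a vertex set inducing a complete bipartite subgraph with shores $X(B)=B\cap X$, $Y(B)=B\cap Y$; $\mathcal{B}(G)$ is the set of inclusion-wise maximal bicliques, ordered by $B\preceq B'\iff X(B)\subseteq X(B')$. $\mathbf{H}(G)$ is the transitive reduction of $(\mathcal{B}(G),\preceq)$: arc $(B,B')$ iff $B'$ covers $B$. For $v\in B$, $B-v$ denotes the biclique with vertex set $B\setminus\{v\}$; $G-v$ is $G$ with $v$ deleted. A universal vertex is adjacent to all vertices of the opposite color class. *)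

theory Defs
  imports Main
begin

definition bipartite :: "'a set \<Rightarrow> 'a set \<Rightarrow> ('a \<Rightarrow> 'a \<Rightarrow> bool) \<Rightarrow> bool" where
  "bipartite X Y E \<longleftrightarrow> finite X \<and> finite Y \<and> X \<inter> Y = {} \<and>
     (\<forall>a b. E a b \<longrightarrow> E b a) \<and>
     (\<forall>a b. E a b \<longrightarrow> (a \<in> X \<and> b \<in> Y) \<or> (a \<in> Y \<and> b \<in> X))"

definition universal_vertex :: "'a set \<Rightarrow> 'a set \<Rightarrow> ('a \<Rightarrow> 'a \<Rightarrow> bool) \<Rightarrow> 'a \<Rightarrow> bool" where
  "universal_vertex X Y E v \<longleftrightarrow>
     (v \<in> X \<and> (\<forall>y\<in>Y. E v y)) \<or> (v \<in> Y \<and> (\<forall>x\<in>X. E v x))"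

text \<open>Biclique: vertex set inducing a complete bipartite subgraph (shores may be empty).\<close>
definition biclique :: "'a set \<Rightarrow> 'a set \<Rightarrow> ('a \<Rightarrow> 'a \<Rightarrow> bool) \<Rightarrow> 'a set \<Rightarrow> bool" where
  "biclique X Y E B \<longleftrightarrow> B \<subseteq> X \<union> Y \<and> (\<forall>x\<in>B \<inter> X. \<forall>y\<in>B \<inter> Y. E x y)"

definition max_biclique :: "'a set \<Rightarrow> 'a set \<Rightarrow> ('a \<Rightarrow> 'a \<Rightarrow> bool) \<Rightarrow> 'a set \<Rightarrow> bool" where
  "max_biclique X Y E B \<longleftrightarrow> biclique X Y E B \<and>
     (\<forall>B'. biclique X Y E B' \<and> B \<subseteq> B' \<longrightarrow> B' = B)"

definition bc_le :: "'a set \<Rightarrow> 'a set \<Rightarrow> 'a set \<Rightarrow> bool" where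
  "bc_le X B B' \<longleftrightarrow> B \<inter> X \<subseteq> B' \<inter> X"

text \<open>Arcs of \<H>(G) (transitive reduction): B' covers B in (\<B>(G), \<preceq>).\<close>
definition H_arc :: "'a set \<Rightarrow> 'a set \<Rightarrow> ('a \<Rightarrow> 'a \<Rightarrow> bool) \<Rightarrow> 'a set \<Rightarrow> 'a set \<Rightarrow> bool" where
  "H_arc X Y E B B' \<longleftrightarrow> max_biclique X Y E B \<and> max_biclique X Y E B' \<and>
     bc_le X B B' \<and> B \<noteq> B' \<and>
     \<not> (\<exists>C. max_biclique X Y E C \<and> bc_le X B C \<and> B \<noteq> C \<and> bc_le X C B' \<and> C \<noteq> B')"

definition del_edges :: "('a \<Rightarrow> 'a \<Rightarrow> bool) \<Rightarrow> 'a \<Rightarrow> 'a \<Rightarrow> 'a \<Rightarrow> bool" where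
  "del_edges E v a b \<longleftrightarrow> E a b \<and> a \<noteq> v \<and> b \<noteq> v"

end

theory Submission
  imports Defs
begin

lemma bc_down:
  assumes "biclique (X - {v}) (Y - {v}) (del_edges E v) C"
  shows "biclique X Y E C"
  using assms unfolding biclique_def del_edges_def by blast

lemma bc_del:
  assumes "biclique X Y E D"
  shows "biclique (X - {v}) (Y - {v}) (del_edges E v) (D - {v})"
  using assms unfolding biclique_def del_edges_def by blast

lemma lift:
  assumes m: "max_biclique (X - {v}) (Y - {v}) (del_edges E v) C'"
  defines "C \<equiv> (if biclique X Y E (insert v C') then insert v C' else C')"
  shows "max_biclique X Y E C" "C - {v} = C'"
proof -
  have bC0: "biclique (X - {v}) (Y - {v}) (del_edges E v) C'" using m unfolding max_biclique_def by simp
  hence vC: "v \<notin> C'" unfolding biclique_def by blast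
  have bC': "biclique X Y E C'" by (rule bc_down[OF bC0])
  show "C - {v} = C'" using vC unfolding C_def by auto
  have "biclique X Y E C" using bC' unfolding C_def by auto
  moreover have "\<forall>D. biclique X Y E D \<and> C \<subseteq> D \<longrightarrow> D = C"
  proof (intro allI impI)
    fix D assume D: "biclique X Y E D \<and> C \<subseteq> D"
    have "C' \<subseteq> C" unfolding C_def by auto
    hence "C' \<subseteq> D - {v}" using D vC by blast
    moreover have "biclique (X - {v}) (Y - {v}) (del_edges E v) (D - {v})" using D by (intro bc_del) simp
    ultimately have DC: "D - {v} = C'" using m unfolding max_biclique_def by blast
    show "D = C"
    proof (cases "v \<in> D")
      case True
      hence "D = insert v C'" using DC by blast
      hence "C = D" unfolding C_def using D by simp
      thus ?thesis by simp
    next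
      case False
      hence "D = C'" using DC by blast
      moreover have "v \<notin> C" using False D by blast
      ultimately show ?thesis unfolding C_def by (simp split: if_splits)
    qed
  qed
  ultimately show "max_biclique X Y E C" unfolding max_biclique_def by blast
qed

lemma inY:
  assumes bip: "bipartite X Y E"
    and mB: "max_biclique (X - {v}) (Y - {v}) (del_edges E v) (B - {v})"
    and bC: "biclique (X - {v}) (Y - {v}) (del_edges E v) C'"
    and le: "B \<inter> X - {v} \<subseteq> C' \<inter> X"
    and y: "y \<in> C' \<inter> Y"
  shows "y \<in> B"
proof -
  have dj: "X \<inter> Y = {}" using bip unfolding bipartite_def by blast
  have yv: "y \<noteq> v" "y \<in> Y - {v}" using bC y unfolding biclique_def by auto
  have bB: "biclique (X - {v}) (Y - {v}) (del_edges E v) (B - {v})"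
    using mB unfolding max_biclique_def by blast
  have "biclique (X - {v}) (Y - {v}) (del_edges E v) (insert y (B - {v}))"
    unfolding biclique_def
  proof (intro conjI ballI)
    show "insert y (B - {v}) \<subseteq> X - {v} \<union> (Y - {v})" using bB yv unfolding biclique_def by blast
  next
    fix a b assume a: "a \<in> insert y (B - {v}) \<inter> (X - {v})" and b: "b \<in> insert y (B - {v}) \<inter> (Y - {v})"
    have ay: "a \<noteq> y" using a yv dj by blast
    hence aB: "a \<in> B - {v}" "a \<in> X - {v}" using a by auto
    show "del_edges E v a b"
    proof (cases "b = y")
      case True
      have "a \<in> C' \<inter> (X - {v})" using aB le by blast
      thus ?thesis using True bC y yv unfolding biclique_def by blast
    next
      case False
      thus ?thesis using aB b bB unfolding biclique_def by blast
    qed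
  qed
  hence "insert y (B - {v}) = B - {v}" using mB unfolding max_biclique_def by blast
  thus ?thesis by blast
qed

lemma arc:
  assumes bip: "bipartite X Y E"
    and h: "H_arc X Y E Lo Hi"
    and mL: "max_biclique (X - {v}) (Y - {v}) (del_edges E v) (Lo - {v})"
    and mH: "max_biclique (X - {v}) (Y - {v}) (del_edges E v) (Hi - {v})"
    and v1: "v \<in> Lo \<union> Hi" and v2: "v \<in> X \<Longrightarrow> v \<in> Hi"
  shows "H_arc (X - {v}) (Y - {v}) (del_edges E v) (Lo - {v}) (Hi - {v})"
proof -
  have dj: "X \<inter> Y = {}" using bip unfolding bipartite_def by blast
  have mLo: "max_biclique X Y E Lo" and mHi: "max_biclique X Y E Hi"
    and le: "bc_le X Lo Hi" and ne: "Lo \<noteq> Hi" using h unfolding H_arc_def by simp_all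
  have le': "bc_le (X - {v}) (Lo - {v}) (Hi - {v})" using le unfolding bc_le_def by blast
  have ne': "Lo - {v} \<noteq> Hi - {v}"
  proof
    assume eq: "Lo - {v} = Hi - {v}"
    show False
    proof (cases "v \<in> Hi")
      case True
      hence "Lo \<subseteq> Hi" using eq by blast
      thus False using mLo mHi ne unfolding max_biclique_def by blast
    next
      case False
      hence "Hi \<subseteq> Lo" using eq v1 by blast
      thus False using mLo mHi ne unfolding max_biclique_def by blast
    qed
  qed
  have nomid: "\<not> (\<exists>C'. max_biclique (X - {v}) (Y - {v}) (del_edges E v) C' \<and>
      bc_le (X - {v}) (Lo - {v}) C' \<and> Lo - {v} \<noteq> C' \<and> bc_le (X - {v}) C' (Hi - {v}) \<and> C' \<noteq> Hi - {v})"
  proof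
    assume "\<exists>C'. max_biclique (X - {v}) (Y - {v}) (del_edges E v) C' \<and>
      bc_le (X - {v}) (Lo - {v}) C' \<and> Lo - {v} \<noteq> C' \<and> bc_le (X - {v}) C' (Hi - {v}) \<and> C' \<noteq> Hi - {v}"
    then obtain C' where mC': "max_biclique (X - {v}) (Y - {v}) (del_edges E v) C'"
      and l1: "bc_le (X - {v}) (Lo - {v}) C'" and n1: "Lo - {v} \<noteq> C'"
      and l2: "bc_le (X - {v}) C' (Hi - {v})" and n2: "C' \<noteq> Hi - {v}" by blast
    define C where "C \<equiv> (if biclique X Y E (insert v C') then insert v C' else C')"
    have mC: "max_biclique X Y E C" and CC: "C - {v} = C'"
      using lift[OF mC'] unfolding C_def by auto
    have bC': "biclique (X - {v}) (Y - {v}) (del_edges E v) C'" using mC' unfolding max_biclique_def by blast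
    have l1x: "Lo \<inter> X - {v} \<subseteq> C' \<inter> X" using l1 unfolding bc_le_def by blast
    have c1: "bc_le X Lo C"
    proof (cases "v \<in> X \<and> v \<in> Lo")
      case True
      have "\<forall>y\<in>C' \<inter> Y. y \<in> Lo" using inY[OF bip mL bC' l1x] by blast
      hence "\<forall>y\<in>C' \<inter> Y. E v y" using mLo True unfolding max_biclique_def biclique_def by blast
      have bb: "biclique X Y E C'" by (rule bc_down[OF bC'])
      have "biclique X Y E (insert v C')" unfolding biclique_def
      proof (intro conjI ballI)
        show "insert v C' \<subseteq> X \<union> Y" using bb True unfolding biclique_def by blast
      next
        fix a b assume a: "a \<in> insert v C' \<inter> X" and b: "b \<in> insert v C' \<inter> Y"
        have bv: "b \<noteq> v" using b True dj by blast
        hence bY: "b \<in> C' \<inter> Y" using b by blast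
        show "E a b"
        proof (cases "a = v")
          case True
          thus ?thesis using bY \<open>\<forall>y\<in>C' \<inter> Y. E v y\<close> by blast
        next
          case False
          hence "a \<in> C' \<inter> X" using a by blast
          thus ?thesis using bb bY unfolding biclique_def by blast
        qed
      qed
      hence "v \<in> C" unfolding C_def by simp
      thus ?thesis using l1x CC unfolding bc_le_def by blast
    next
      case False
      thus ?thesis using l1x CC unfolding bc_le_def by blast
    qed
    have CI: "C \<subseteq> insert v C'" unfolding C_def by auto
    have c2: "bc_le X C Hi" unfolding bc_le_def
    proof
      fix x assume x: "x \<in> C \<inter> X"
      show "x \<in> Hi \<inter> X"
      proof (cases "x = v")
        case True thus ?thesis using x v2 by blast
      next
        case False
        hence "x \<in> C' \<inter> (X - {v})" using x CI by blast
        thus ?thesis using l2 unfolding bc_le_def by blast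
      qed
    qed
    have "Lo \<noteq> C" using n1 CC by blast
    moreover have "C \<noteq> Hi" using n2 CC by blast
    ultimately show False using h mC c1 c2 unfolding H_arc_def by blast
  qed
  show ?thesis unfolding H_arc_def using mL mH le' ne' nomid by blast
qed

theorem lemma4:
  fixes X Y :: "'a set" and E :: "'a \<Rightarrow> 'a \<Rightarrow> bool" and B0 :: "'a set" and v :: 'a
  assumes "bipartite X Y E"
    and "\<forall>u \<in> X \<union> Y. \<not> universal_vertex X Y E u"
    and "max_biclique X Y E B0"
    and "v \<in> B0"
    and "max_biclique (X - {v}) (Y - {v}) (del_edges E v) (B0 - {v})"
  shows "(\<forall>B. max_biclique X Y E B \<and>
              max_biclique (X - {v}) (Y - {v}) (del_edges E v) (B - {v}) \<and>
              H_arc X Y E B B0 \<longrightarrow>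
              H_arc (X - {v}) (Y - {v}) (del_edges E v) (B - {v}) (B0 - {v}))
       \<and> (\<forall>B. max_biclique X Y E B \<and>
              max_biclique (X - {v}) (Y - {v}) (del_edges E v) (B - {v}) \<and>
              H_arc X Y E B0 B \<longrightarrow>
              H_arc (X - {v}) (Y - {v}) (del_edges E v) (B0 - {v}) (B - {v}))"
proof (intro conjI allI impI)
  fix B assume a: "max_biclique X Y E B \<and>
              max_biclique (X - {v}) (Y - {v}) (del_edges E v) (B - {v}) \<and> H_arc X Y E B B0"
  show "H_arc (X - {v}) (Y - {v}) (del_edges E v) (B - {v}) (B0 - {v})"
    using arc[OF assms(1)] a assms(4,5) by blast
next
  fix B assume a: "max_biclique X Y E B \<and>
              max_biclique (X - {v}) (Y - {v}) (del_edges E v) (B - {v}) \<and> H_arc X Y E B0 B"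
  have "v \<in> X \<Longrightarrow> v \<in> B" using a assms(4) unfolding H_arc_def bc_le_def by blast
  thus "H_arc (X - {v}) (Y - {v}) (del_edges E v) (B0 - {v}) (B - {v})"
    using arc[OF assms(1)] a assms(4,5) by blast
qed

end
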